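(* Let $\beta>\alpha>0$ and let $q=(q_1,q_2,q_3,q_4)$ be a convex non-collinear central configuration of the planar Newtonian 4-body problem with masses $m_1=m_2=\beta$, $m_3=m_4=\alpha$, with $q_1,q_2,q_3,q_4$ in cyclic order around the convex quadrilateral. If $r_{13}=r_{24}$, then $\Delta_4=-\Delta_3$.
   Context: Bodies have positions $q_i\in\mathbb{R}^2$ and masses $m_i>0$; $r_{ij}=\|q_i-q_j\|$; $U(q)=\sum_{i<j}m_im_j/r_{ij}$. A configuration with distinct points and $\sum_i m_iq_i=0$ is a central configuration if $\sum_{j\neq i} m_j\frac{q_j-q_i}{r_{ij}^3}=\lambda q_i$ for all $i$ and some constant $\lambda$. "Convex non-collinear": the four points are vertices of a strictly convex quadrilateral. For $1\le i\le 4$, $|\Delta_i|$ denotes the area of the triangle formed by the three points $q_j$, $j\neq i$, and the oriented areas are $\Delta_1=-|\Delta_1|$, $\Delta_2=|\Delta_2|$, $\Delta_3=-|\Delta_3|$, $\Delta_4=|\Delta_4|$; they satisfy $\Delta_1+\Delta_2+\Delta_3+\Delta_4=0$. *)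

theory Defs
  imports "HOL-Analysis.Analysis"
begin

definition cross2 :: "real^2 \<Rightarrow> real^2 \<Rightarrow> real" where
  "cross2 u v = u$1 * v$2 - u$2 * v$1"

definition orient :: "real^2 \<Rightarrow> real^2 \<Rightarrow> real^2 \<Rightarrow> real" where
  "orient a b c = cross2 (b - a) (c - a)"

definition tri_area :: "real^2 \<Rightarrow> real^2 \<Rightarrow> real^2 \<Rightarrow> real" where
  "tri_area a b c = \<bar>orient a b c\<bar> / 2"

definition central_configuration :: "(nat \<Rightarrow> real) \<Rightarrow> (nat \<Rightarrow> real^2) \<Rightarrow> bool" where
  "central_configuration m q \<longleftrightarrow>
     (\<forall>i\<in>{1..4}. \<forall>j\<in>{1..4}. i \<noteq> j \<longrightarrow> q i \<noteq> q j) \<and>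
     (\<Sum>i\<in>{1..4}. m i *\<^sub>R q i) = 0 \<and>
     (\<exists>lam::real. \<forall>i\<in>{1..4}.
        (\<Sum>j\<in>{1..4} - {i}. (m j / dist (q i) (q j) ^ 3) *\<^sub>R (q j - q i)) = lam *\<^sub>R q i)"

definition nxt :: "nat \<Rightarrow> nat" where
  "nxt i = (if i = 4 then 1 else i + 1)"

text \<open>q 1, q 2, q 3, q 4 are, in this cyclic order, the vertices of a strictly convex
  quadrilateral: for every edge (q i, q (nxt i)) the two remaining vertices lie strictly
  on the same side of the line through that edge.\<close>
definition convex_cyclic :: "(nat \<Rightarrow> real^2) \<Rightarrow> bool" where
  "convex_cyclic q \<longleftrightarrow>
     (\<forall>i\<in>{1..4}. \<forall>k\<in>{1..4}. \<forall>l\<in>{1..4}.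
        k \<notin> {i, nxt i} \<and> l \<notin> {i, nxt i} \<longrightarrow>
        orient (q i) (q (nxt i)) (q k) * orient (q i) (q (nxt i)) (q l) > 0)"

definition abs_Delta :: "(nat \<Rightarrow> real^2) \<Rightarrow> nat \<Rightarrow> real" where
  "abs_Delta q i =
     (if i = 1 then tri_area (q 2) (q 3) (q 4)
      else if i = 2 then tri_area (q 1) (q 3) (q 4)
      else if i = 3 then tri_area (q 1) (q 2) (q 4)
      else tri_area (q 1) (q 2) (q 3))"

definition Delta :: "(nat \<Rightarrow> real^2) \<Rightarrow> nat \<Rightarrow> real" where
  "Delta q i = (-1) ^ i * abs_Delta q i"

end

theory Submission
  imports Defs
begin

lemma elim3:
  fixes c2 c3 c4 X2 X3 X4 Y2 Y3 Y4 :: real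
  assumes "c2*X2 + c3*X3 + c4*X4 = 0" "c2*Y2+c3*Y3+c4*Y4 = 0"
  shows "c2*(X2*Y4 - Y2*X4) + c3*(X3*Y4 - Y3*X4) = 0"
proof -
  have "c2*(X2*Y4 - Y2*X4) + c3*(X3*Y4 - Y3*X4) = (c2*X2 + c3*X3 + c4*X4)*Y4 - (c2*Y2+c3*Y3+c4*Y4)*X4"
    by (simp add: algebra_simps)
  then show ?thesis using assms by simp
qed

lemma equi:
  fixes p1 p2 a1 a2 b1 b2 :: real
  assumes "a1^2+a2^2 = p1^2+p2^2" "(a1-p1)^2+(a2-p2)^2 = p1^2+p2^2"
    "b1^2+b2^2 = p1^2+p2^2" "(b1-p1)^2+(b2-p2)^2 = p1^2+p2^2"
    "(p1*a2-p2*a1)*(p1*b2-p2*b1) > 0"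
  shows "a1 = b1 \<and> a2 = b2"
proof -
  define ca where "ca = p1*a2-p2*a1"
  define cb where "cb = p1*b2-p2*b1"
  have da: "2*(a1*p1+a2*p2) = p1^2+p2^2" using assms(1,2) by (simp add: power2_eq_square algebra_simps)
  have db: "2*(b1*p1+b2*p2) = p1^2+p2^2" using assms(3,4) by (simp add: power2_eq_square algebra_simps)
  have la: "ca^2 = (p1^2+p2^2)*(a1^2+a2^2) - (a1*p1+a2*p2)^2" unfolding ca_def by algebra
  have lb: "cb^2 = (p1^2+p2^2)*(b1^2+b2^2) - (b1*p1+b2*p2)^2" unfolding cb_def by algebra
  have "ca^2 = cb^2" using la lb da db assms(1,3) by algebra
  moreover have "ca*cb > 0" using assms(5) unfolding ca_def cb_def by simp
  ultimately have cab: "ca = cb"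
  proof -
    assume sq: "ca^2 = cb^2" and pos: "ca*cb > 0"
    have "(ca-cb)*(ca+cb) = 0" using sq by algebra
    moreover have "ca+cb \<noteq> 0"
    proof
      assume "ca+cb = 0" then have "cb = -ca" by simp
      then have "ca*cb = -(ca*ca)" by simp
      moreover have "ca*ca \<ge> 0" by simp
      ultimately show False using pos by linarith
    qed
    ultimately show ?thesis by simp
  qed
  have e1: "(a1-b1)*p1 + (a2-b2)*p2 = 0" using da db by (simp add: algebra_simps)
  have e2: "p1*(a2-b2) - p2*(a1-b1) = 0" using cab unfolding ca_def cb_def by (simp add: algebra_simps)
  have "(p1^2+p2^2)*((a1-b1)^2+(a2-b2)^2) = ((a1-b1)*p1 + (a2-b2)*p2)^2 + (p1*(a2-b2) - p2*(a1-b1))^2"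
    by algebra
  then have z: "(p1^2+p2^2)*((a1-b1)^2+(a2-b2)^2) = 0" using e1 e2 by simp
  have "p1^2+p2^2 \<noteq> 0"
  proof
    assume "p1^2+p2^2 = 0" then have "p1 = 0" "p2 = 0" by (auto simp: add_nonneg_eq_0_iff)
    then show False using assms(5) by simp
  qed
  with z have "(a1-b1)^2+(a2-b2)^2 = 0" by auto
  then show ?thesis by (auto simp: add_nonneg_eq_0_iff)
qed

lemma trap:
  fixes u1 u2 d1 d2 w1 w2 :: real
  assumes "u1*d2 - u2*d1 = 0"
    "(u1-w1)^2+(u2-w2)^2 = (w1+d1)^2+(w2+d2)^2"
    "((-w1)*u2 - (-w2)*u1)*((-w1)*d2-(-w2)*d1) > 0"
  shows "w1^2+w2^2 = (w1+d1-u1)^2+(w2+d2-u2)^2"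
proof -
  define e1 where "e1 = u1+d1"
  define e2 where "e2 = u2+d2"
  define f1 where "f1 = d1-u1"
  define f2 where "f2 = d2-u2"
  have cr: "e1*f2 - e2*f1 = 0" using assms(1) unfolding e1_def e2_def f1_def f2_def by algebra
  have h: "-(e1*f1+e2*f2) = 2*(w1*e1+w2*e2)" using assms(2) unfolding e1_def e2_def f1_def f2_def
    by algebra
  have k1: "(e1^2+e2^2)*(f1^2+f2^2) = (e1*f1+e2*f2)^2" using cr by algebra
  have k2: "(e1^2+e2^2)*(w1*f1+w2*f2) = (e1*f1+e2*f2)*(w1*e1+w2*e2)" using cr by algebra
  have g: "(e1^2+e2^2)*((f1^2+f2^2) + 2*(w1*f1+w2*f2)) = 0"
    using k1 k2 h by algebra
  have "e1^2+e2^2 \<noteq> 0"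
  proof
    assume "e1^2+e2^2 = 0" then have "e1 = 0" "e2 = 0" by (auto simp: add_nonneg_eq_0_iff)
    then have "d1 = -u1" "d2 = -u2" unfolding e1_def e2_def by auto
    then have "((-w1)*u2 - (-w2)*u1)*((-w1)*d2-(-w2)*d1) = -(((-w1)*u2 - (-w2)*u1)*((-w1)*u2 - (-w2)*u1))"
      by algebra
    moreover have "((-w1)*u2 - (-w2)*u1)*((-w1)*u2 - (-w2)*u1) \<ge> 0" by simp
    ultimately show False using assms(3) by linarith
  qed
  with g have "(f1^2+f2^2) + 2*(w1*f1+w2*f2) = 0" by auto
  then show ?thesis unfolding f1_def f2_def by algebra
qed
lemma cube_inj:
  fixes r s :: real assumes "r > 0" "s > 0" "1/r^3 + L = 1/s^3 + L" shows "r = s"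
proof -
  have "r^3 = s^3" using assms by (simp add: field_simps)
  then show ?thesis using assms by (metis less_imp_le power_eq_imp_eq_base zero_less_numeral)
qed

lemma scalar_main:
  fixes x1 x2 x3 x4 y1 y2 y3 y4 r12 r13 r14 r23 r24 r34 lam \<alpha> \<beta> :: real
  assumes ab: "0 < \<alpha>" "\<alpha> < \<beta>"
  and rpos: "r12 > 0" "r13 > 0" "r14 > 0" "r23 > 0" "r24 > 0" "r34 > 0"
  and rsq: "r12^2 = (x1-x2)^2+(y1-y2)^2" "r13^2 = (x1-x3)^2+(y1-y3)^2"
     "r14^2 = (x1-x4)^2+(y1-y4)^2" "r23^2 = (x2-x3)^2+(y2-y3)^2"
     "r24^2 = (x2-x4)^2+(y2-y4)^2" "r34^2 = (x3-x4)^2+(y3-y4)^2"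
  and comx: "\<beta>*x1+\<beta>*x2+\<alpha>*x3+\<alpha>*x4 = 0"
  and comy: "\<beta>*y1+\<beta>*y2+\<alpha>*y3+\<alpha>*y4 = 0"
  and v1x: "\<beta>/r12^3*(x2-x1) + \<alpha>/r13^3*(x3-x1) + \<alpha>/r14^3*(x4-x1) = lam*x1"
  and v1y: "\<beta>/r12^3*(y2-y1) + \<alpha>/r13^3*(y3-y1) + \<alpha>/r14^3*(y4-y1) = lam*y1"
  and v2x: "\<beta>/r12^3*(x1-x2) + \<alpha>/r23^3*(x3-x2) + \<alpha>/r24^3*(x4-x2) = lam*x2"
  and v2y: "\<beta>/r12^3*(y1-y2) + \<alpha>/r23^3*(y3-y2) + \<alpha>/r24^3*(y4-y2) = lam*y2"
  and v3x: "\<beta>/r13^3*(x1-x3) + \<beta>/r23^3*(x2-x3) + \<alpha>/r34^3*(x4-x3) = lam*x3"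
  and v3y: "\<beta>/r13^3*(y1-y3) + \<beta>/r23^3*(y2-y3) + \<alpha>/r34^3*(y4-y3) = lam*y3"
  and diag: "r13 = r24"
  and cv: "((x2-x1)*(y4-y1) - (y2-y1)*(x4-x1)) * ((x2-x1)*(y3-y1) - (y2-y1)*(x3-x1)) > 0"
     "((x2-x1)*(y3-y1) - (y2-y1)*(x3-x1)) * ((x3-x2)*(y4-y2) - (y3-y2)*(x4-x2)) > 0"
     "((x3-x1)*(y4-y1) - (y3-y1)*(x4-x1)) * ((x3-x2)*(y4-y2) - (y3-y2)*(x4-x2)) > 0"
  shows "(x2-x1)*(y4-y1) - (y2-y1)*(x4-x1) = (x2-x1)*(y3-y1) - (y2-y1)*(x3-x1)"
proof -
  define T1 where "T1 = (x3-x2)*(y4-y2) - (y3-y2)*(x4-x2)"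
  define T2 where "T2 = (x3-x1)*(y4-y1) - (y3-y1)*(x4-x1)"
  define T3 where "T3 = (x2-x1)*(y4-y1) - (y2-y1)*(x4-x1)"
  define T4 where "T4 = (x2-x1)*(y3-y1) - (y2-y1)*(x3-x1)"
  have c34: "T3*T4 > 0" and c41: "T4*T1 > 0" and c21: "T2*T1 > 0"
    using cv unfolding T1_def T2_def T3_def T4_def by auto
  have nz: "T1 \<noteq> 0" "T2 \<noteq> 0" "T3 \<noteq> 0" "T4 \<noteq> 0" using c34 c41 c21 by auto
  have Tid: "T1 - T2 + T3 - T4 = 0" unfolding T1_def T2_def T3_def T4_def by algebra
  define L where "L = lam/(2*\<alpha>+2*\<beta>)"
  have LM: "L*(2*\<alpha>+2*\<beta>) = lam" unfolding L_def using ab by simp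
  define S12 where "S12 = 1/r12^3 + L"
  define S13 where "S13 = 1/r13^3 + L"
  define S14 where "S14 = 1/r14^3 + L"
  define S23 where "S23 = 1/r23^3 + L"
  define S24 where "S24 = 1/r24^3 + L"
  define S34 where "S34 = 1/r34^3 + L"
  have e1x: "(\<beta>*S12)*(x2-x1) + (\<alpha>*S13)*(x3-x1) + (\<alpha>*S14)*(x4-x1) = 0"
  proof -
    have "(\<beta>*S12)*(x2-x1) + (\<alpha>*S13)*(x3-x1) + (\<alpha>*S14)*(x4-x1)
      = (\<beta>/r12^3*(x2-x1) + \<alpha>/r13^3*(x3-x1) + \<alpha>/r14^3*(x4-x1)) + L*(\<beta>*x1+\<beta>*x2+\<alpha>*x3+\<alpha>*x4)
        - (L*(2*\<alpha>+2*\<beta>))*x1"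
      unfolding S12_def S13_def S14_def by (simp add: algebra_simps)
    then show ?thesis using v1x comx LM by simp
  qed
  have e1y: "(\<beta>*S12)*(y2-y1) + (\<alpha>*S13)*(y3-y1) + (\<alpha>*S14)*(y4-y1) = 0"
  proof -
    have "(\<beta>*S12)*(y2-y1) + (\<alpha>*S13)*(y3-y1) + (\<alpha>*S14)*(y4-y1)
      = (\<beta>/r12^3*(y2-y1) + \<alpha>/r13^3*(y3-y1) + \<alpha>/r14^3*(y4-y1)) + L*(\<beta>*y1+\<beta>*y2+\<alpha>*y3+\<alpha>*y4)
        - (L*(2*\<alpha>+2*\<beta>))*y1"
      unfolding S12_def S13_def S14_def by (simp add: algebra_simps)
    then show ?thesis using v1y comy LM by simp
  qed
  have e2x: "(\<beta>*S12)*(x1-x2) + (\<alpha>*S23)*(x3-x2) + (\<alpha>*S24)*(x4-x2) = 0"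
  proof -
    have "(\<beta>*S12)*(x1-x2) + (\<alpha>*S23)*(x3-x2) + (\<alpha>*S24)*(x4-x2)
      = (\<beta>/r12^3*(x1-x2) + \<alpha>/r23^3*(x3-x2) + \<alpha>/r24^3*(x4-x2)) + L*(\<beta>*x1+\<beta>*x2+\<alpha>*x3+\<alpha>*x4)
        - (L*(2*\<alpha>+2*\<beta>))*x2"
      unfolding S12_def S23_def S24_def by (simp add: algebra_simps)
    then show ?thesis using v2x comx LM by simp
  qed
  have e2y: "(\<beta>*S12)*(y1-y2) + (\<alpha>*S23)*(y3-y2) + (\<alpha>*S24)*(y4-y2) = 0"
  proof -
    have "(\<beta>*S12)*(y1-y2) + (\<alpha>*S23)*(y3-y2) + (\<alpha>*S24)*(y4-y2)
      = (\<beta>/r12^3*(y1-y2) + \<alpha>/r23^3*(y3-y2) + \<alpha>/r24^3*(y4-y2)) + L*(\<beta>*y1+\<beta>*y2+\<alpha>*y3+\<alpha>*y4)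
        - (L*(2*\<alpha>+2*\<beta>))*y2"
      unfolding S12_def S23_def S24_def by (simp add: algebra_simps)
    then show ?thesis using v2y comy LM by simp
  qed
  have e3x: "(\<beta>*S13)*(x1-x3) + (\<beta>*S23)*(x2-x3) + (\<alpha>*S34)*(x4-x3) = 0"
  proof -
    have "(\<beta>*S13)*(x1-x3) + (\<beta>*S23)*(x2-x3) + (\<alpha>*S34)*(x4-x3)
      = (\<beta>/r13^3*(x1-x3) + \<beta>/r23^3*(x2-x3) + \<alpha>/r34^3*(x4-x3)) + L*(\<beta>*x1+\<beta>*x2+\<alpha>*x3+\<alpha>*x4)
        - (L*(2*\<alpha>+2*\<beta>))*x3"
      unfolding S13_def S23_def S34_def by (simp add: algebra_simps)
    then show ?thesis using v3x comx LM by simp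
  qed
  have e3y: "(\<beta>*S13)*(y1-y3) + (\<beta>*S23)*(y2-y3) + (\<alpha>*S34)*(y4-y3) = 0"
  proof -
    have "(\<beta>*S13)*(y1-y3) + (\<beta>*S23)*(y2-y3) + (\<alpha>*S34)*(y4-y3)
      = (\<beta>/r13^3*(y1-y3) + \<beta>/r23^3*(y2-y3) + \<alpha>/r34^3*(y4-y3)) + L*(\<beta>*y1+\<beta>*y2+\<alpha>*y3+\<alpha>*y4)
        - (L*(2*\<alpha>+2*\<beta>))*y3"
      unfolding S13_def S23_def S34_def by (simp add: algebra_simps)
    then show ?thesis using v3y comy LM by simp
  qed
  have R1: "\<beta>*S12*T3 + \<alpha>*S13*T2 = 0"
    using elim3[OF e1x e1y] unfolding T2_def T3_def by simp
  have R2: "\<beta>*S12*T4 + \<alpha>*S24*T1 = 0"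
  proof -
    have a: "(\<beta>*S12)*(x1-x2) + (\<alpha>*S24)*(x4-x2) + (\<alpha>*S23)*(x3-x2) = 0" using e2x by linarith
    have b: "(\<beta>*S12)*(y1-y2) + (\<alpha>*S24)*(y4-y2) + (\<alpha>*S23)*(y3-y2) = 0" using e2y by linarith
    have "\<beta>*S12*T4 + \<alpha>*S24*T1 = -((\<beta>*S12)*((x1-x2)*(y3-y2) - (y1-y2)*(x3-x2)) + (\<alpha>*S24)*((x4-x2)*(y3-y2) - (y4-y2)*(x3-x2)))"
      unfolding T1_def T4_def by (simp add: algebra_simps)
    then show ?thesis using elim3[OF a b] by simp
  qed
  have R3: "\<beta>*S13*T4 + \<alpha>*S34*T1 = 0"
  proof -
    have a: "(\<beta>*S13)*(x1-x3) + (\<alpha>*S34)*(x4-x3) + (\<beta>*S23)*(x2-x3) = 0" using e3x by linarith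
    have b: "(\<beta>*S13)*(y1-y3) + (\<alpha>*S34)*(y4-y3) + (\<beta>*S23)*(y2-y3) = 0" using e3y by linarith
    have "\<beta>*S13*T4 + \<alpha>*S34*T1 = ((\<beta>*S13)*((x1-x3)*(y2-y3) - (y1-y3)*(x2-x3)) + (\<alpha>*S34)*((x4-x3)*(y2-y3) - (y4-y3)*(x2-x3)))"
      unfolding T1_def T4_def by (simp add: algebra_simps)
    then show ?thesis using elim3[OF a b] by simp
  qed
  have R4: "\<alpha>*S13*T4 + \<alpha>*S14*T3 = 0"
  proof -
    have a: "(\<alpha>*S13)*(x3-x1) + (\<alpha>*S14)*(x4-x1) + (\<beta>*S12)*(x2-x1) = 0" using e1x by linarith
    have b: "(\<alpha>*S13)*(y3-y1) + (\<alpha>*S14)*(y4-y1) + (\<beta>*S12)*(y2-y1) = 0" using e1y by linarith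
    have "\<alpha>*S13*T4 + \<alpha>*S14*T3 = -((\<alpha>*S13)*((x3-x1)*(y2-y1) - (y3-y1)*(x2-x1)) + (\<alpha>*S14)*((x4-x1)*(y2-y1) - (y4-y1)*(x2-x1)))"
      unfolding T3_def T4_def by (simp add: algebra_simps)
    then show ?thesis using elim3[OF a b] by simp
  qed
  have R5: "- \<beta>*S12*T3 + \<alpha>*S23*T1 = 0"
  proof -
    have a: "(\<beta>*S12)*(x1-x2) + (\<alpha>*S23)*(x3-x2) + (\<alpha>*S24)*(x4-x2) = 0" using e2x by linarith
    have b: "(\<beta>*S12)*(y1-y2) + (\<alpha>*S23)*(y3-y2) + (\<alpha>*S24)*(y4-y2) = 0" using e2y by linarith
    have "- \<beta>*S12*T3 + \<alpha>*S23*T1 = ((\<beta>*S12)*((x1-x2)*(y4-y2) - (y1-y2)*(x4-x2)) + (\<alpha>*S23)*((x3-x2)*(y4-y2) - (y3-y2)*(x4-x2)))"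
      unfolding T1_def T3_def by (simp add: algebra_simps)
    then show ?thesis using elim3[OF a b] by simp
  qed
  have S13nz: "S13 \<noteq> 0"
  proof
    assume z: "S13 = 0"
    have "S24 = S13" unfolding S24_def S13_def using diag by simp
    then have z24: "S24 = 0" using z by simp
    have z12: "S12 = 0" using R1 z nz ab by simp
    have z14: "S14 = 0" using R4 z nz ab by simp
    have z23: "S23 = 0" using R5 z12 nz ab by simp
    have q13: "r13 = r12" using cube_inj[OF rpos(2) rpos(1), of L] z z12 unfolding S12_def S13_def by simp
    have q23: "r23 = r12" using cube_inj[OF rpos(4) rpos(1), of L] z23 z12 unfolding S12_def S23_def by simp
    have q14: "r14 = r12" using cube_inj[OF rpos(3) rpos(1), of L] z14 z12 unfolding S12_def S14_def by simp
    have q24: "r24 = r12" using cube_inj[OF rpos(5) rpos(1), of L] z24 z12 unfolding S12_def S24_def by simp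
    have "x3-x1 = x4-x1 \<and> y3-y1 = y4-y1"
    proof (rule equi[of "x3-x1" "y3-y1" "x2-x1" "y2-y1" "x4-x1" "y4-y1"])
      show "(x3-x1)^2+(y3-y1)^2 = (x2-x1)^2+(y2-y1)^2" using rsq(1,2) q13 by (simp add: power2_commute)
      show "(x3-x1-(x2-x1))^2+(y3-y1-(y2-y1))^2 = (x2-x1)^2+(y2-y1)^2" using rsq(1,4) q23 by (simp add: power2_commute)
      show "(x4-x1)^2+(y4-y1)^2 = (x2-x1)^2+(y2-y1)^2" using rsq(1,3) q14 by (simp add: power2_commute)
      show "(x4-x1-(x2-x1))^2+(y4-y1-(y2-y1))^2 = (x2-x1)^2+(y2-y1)^2" using rsq(1,5) q24 by (simp add: power2_commute)
      show "((x2-x1)*(y3-y1)-(y2-y1)*(x3-x1))*((x2-x1)*(y4-y1)-(y2-y1)*(x4-x1)) > 0"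
        using c34 unfolding T3_def T4_def by (simp add: mult.commute)
    qed
    then have "r34^2 = 0" using rsq(6) by simp
    then show False using rpos(6) by simp
  qed
  have "\<alpha>*S13*(T2*T4 - T1*T3) = 0"
  proof -
    have "S24 = S13" unfolding S24_def S13_def using diag by simp
    moreover have "\<alpha>*S13*(T2*T4 - T1*T3) = T4*(\<beta>*S12*T3 + \<alpha>*S13*T2) - T3*(\<beta>*S12*T4 + \<alpha>*S13*T1)"
      by (simp add: algebra_simps)
    ultimately show ?thesis using R1 R2 by simp
  qed
  then have TT: "T2*T4 = T1*T3" using S13nz ab by simp
  have "(T1-T2)*(T1-T4) = T1*(T1 - T2 + T3 - T4) + (T2*T4 - T1*T3)" by (simp add: algebra_simps)
  then have "(T1-T2)*(T1-T4) = 0" using TT Tid by simp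
  then have "T1 = T2 \<or> T1 = T4" by simp
  then show ?thesis
  proof
    assume "T1 = T2" then have "T3 = T4" using Tid by simp
    then show ?thesis unfolding T3_def T4_def .
  next
    assume h14: "T1 = T4"
    then have h23: "T2 = T3" using Tid by simp
    have "(x1-x2)^2+(y1-y2)^2 = ((x1-x2)+(x4-x1)-(x3-x2))^2+((y1-y2)+(y4-y1)-(y3-y2))^2"
    proof (rule trap)
      show "(x3-x2)*(y4-y1) - (y3-y2)*(x4-x1) = 0" using h14 unfolding T1_def T4_def by algebra
      show "(x3-x2-(x1-x2))^2+(y3-y2-(y1-y2))^2 = ((x1-x2)+(x4-x1))^2+((y1-y2)+(y4-y1))^2"
        using rsq(2,5) diag by (simp add: power2_commute)
      show "((-(x1-x2))*(y3-y2) - (-(y1-y2))*(x3-x2))*((-(x1-x2))*(y4-y1)-(-(y1-y2))*(x4-x1)) > 0"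
        using c34 unfolding T3_def T4_def by (simp add: mult.commute algebra_simps)
    qed
    then have "r12^2 = r34^2" using rsq(1,6) by (simp add: power2_commute)
    then have "r12 = r34" using rpos by (simp add: power2_eq_iff_nonneg)
    then have S1234: "S12 = S34" unfolding S12_def S34_def by simp
    have a1: "\<beta>*S12 = -\<alpha>*S13"
    proof -
      have "(\<beta>*S12 + \<alpha>*S13)*T3 = (\<beta>*S12*T3 + \<alpha>*S13*T2) + \<alpha>*S13*(T3-T2)" by (simp add: algebra_simps)
      then have "(\<beta>*S12 + \<alpha>*S13)*T3 = 0" using R1 h23 by simp
      then show ?thesis using nz by simp
    qed
    have a2: "\<alpha>*S34 = -\<beta>*S13"
    proof -
      have "(\<beta>*S13 + \<alpha>*S34)*T4 = (\<beta>*S13*T4 + \<alpha>*S34*T1) + \<alpha>*S34*(T4-T1)" by (simp add: algebra_simps)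
      then have "(\<beta>*S13 + \<alpha>*S34)*T4 = 0" using R3 h14 by simp
      then show ?thesis using nz by simp
    qed
    have "(\<beta>*\<beta> - \<alpha>*\<alpha>)*S13 = \<beta>*(\<alpha>*S34 + \<beta>*S13) - \<alpha>*(\<beta>*S12 + \<alpha>*S13) + \<alpha>*\<beta>*(S12 - S34)" by (simp add: algebra_simps)
    then have "(\<beta>*\<beta> - \<alpha>*\<alpha>)*S13 = 0" using a1 a2 S1234 by simp
    moreover have "\<beta>*\<beta> - \<alpha>*\<alpha> > 0" using ab mult_strict_mono[of \<alpha> \<beta> \<alpha> \<beta>] by simp
    ultimately show ?thesis using S13nz by simp
  qed
qed

lemma dist2: "dist (a::real^2) b ^ 2 = (a$1-b$1)^2 + (a$2-b$2)^2"
  by (simp add: dist_norm norm_eq_sqrt_inner inner_vec_def sum_2 power2_eq_square)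

theorem lemma3p3:
  fixes \<alpha> \<beta> :: real and m :: "nat \<Rightarrow> real" and q :: "nat \<Rightarrow> real^2"
  assumes "0 < \<alpha>" and "\<alpha> < \<beta>"
    and "m 1 = \<beta>" and "m 2 = \<beta>" and "m 3 = \<alpha>" and "m 4 = \<alpha>"
    and "central_configuration m q"
    and "convex_cyclic q"
    and "dist (q 1) (q 3) = dist (q 2) (q 4)"
  shows "Delta q 4 = - Delta q 3"
proof -
  have I4: "{1..4::nat} = {1,2,3,4}" by auto
  have D1: "{1..4::nat} - {1} = {2,3,4}" by auto
  have D2: "{1..4::nat} - {2} = {1,3,4}" by auto
  have D3: "{1..4::nat} - {3} = {1,2,4}" by auto
  from assms(7) obtain lam where
    dst: "\<forall>i\<in>{1..4}. \<forall>j\<in>{1..4}. i \<noteq> j \<longrightarrow> q i \<noteq> q j" and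
    com: "(\<Sum>i\<in>{1..4}. m i *\<^sub>R q i) = 0" and
    eq: "\<forall>i\<in>{1..4}.
        (\<Sum>j\<in>{1..4} - {i}. (m j / dist (q i) (q j) ^ 3) *\<^sub>R (q j - q i)) = lam *\<^sub>R q i"
    unfolding central_configuration_def by blast
  have com': "\<beta> *\<^sub>R q 1 + \<beta> *\<^sub>R q 2 + \<alpha> *\<^sub>R q 3 + \<alpha> *\<^sub>R q 4 = 0"
    using com assms(3-6) unfolding I4 by (simp add: add.assoc)
  have eq1: "(\<beta> / dist (q 1) (q 2) ^ 3) *\<^sub>R (q 2 - q 1) + (\<alpha> / dist (q 1) (q 3) ^ 3) *\<^sub>R (q 3 - q 1)
     + (\<alpha> / dist (q 1) (q 4) ^ 3) *\<^sub>R (q 4 - q 1) = lam *\<^sub>R q 1"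
    using eq[rule_format, of 1] assms(3-6) unfolding D1 by (simp add: add.assoc)
  have eq2: "(\<beta> / dist (q 1) (q 2) ^ 3) *\<^sub>R (q 1 - q 2) + (\<alpha> / dist (q 2) (q 3) ^ 3) *\<^sub>R (q 3 - q 2)
     + (\<alpha> / dist (q 2) (q 4) ^ 3) *\<^sub>R (q 4 - q 2) = lam *\<^sub>R q 2"
    using eq[rule_format, of 2] assms(3-6) unfolding D2 by (simp add: add.assoc dist_commute)
  have eq3: "(\<beta> / dist (q 1) (q 3) ^ 3) *\<^sub>R (q 1 - q 3) + (\<beta> / dist (q 2) (q 3) ^ 3) *\<^sub>R (q 2 - q 3)
     + (\<alpha> / dist (q 3) (q 4) ^ 3) *\<^sub>R (q 4 - q 3) = lam *\<^sub>R q 3"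
    using eq[rule_format, of 3] assms(3-6) unfolding D3 by (simp add: add.assoc dist_commute)
  have rp: "dist (q i) (q j) > 0" if "i \<in> {1..4}" "j \<in> {1..4}" "i \<noteq> j" for i j
    using dst that by auto
  have cc: "orient (q i) (q (nxt i)) (q k) * orient (q i) (q (nxt i)) (q l) > 0"
    if "i\<in>{1..4}" "k\<in>{1..4}" "l\<in>{1..4}" "k \<notin> {i, nxt i}" "l \<notin> {i, nxt i}" for i k l
    using assms(8) that unfolding convex_cyclic_def by blast
  have n1: "nxt 1 = 2" "nxt 2 = 3" "nxt 3 = 4" by (simp_all add: nxt_def)
  have cv1: "orient (q 1) (q 2) (q 4) * orient (q 1) (q 2) (q 3) > 0"
    using cc[of 1 4 3, unfolded n1] by simp
  have cv2: "orient (q 2) (q 3) (q 1) * orient (q 2) (q 3) (q 4) > 0"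
    using cc[of 2 1 4, unfolded n1] by simp
  have cv3: "orient (q 3) (q 4) (q 1) * orient (q 3) (q 4) (q 2) > 0"
    using cc[of 3 1 2, unfolded n1] by simp
  have main: "(q 2$1-q 1$1)*(q 4$2-q 1$2) - (q 2$2-q 1$2)*(q 4$1-q 1$1)
            = (q 2$1-q 1$1)*(q 3$2-q 1$2) - (q 2$2-q 1$2)*(q 3$1-q 1$1)"
  proof (rule scalar_main[OF assms(1,2) rp[of 1 2] rp[of 1 3] rp[of 1 4] rp[of 2 3] rp[of 2 4] rp[of 3 4]
      dist2 dist2 dist2 dist2 dist2 dist2, where lam = lam])
    show "\<beta> * q 1 $ 1 + \<beta> * q 2 $ 1 + \<alpha> * q 3 $ 1 + \<alpha> * q 4 $ 1 = 0"
      using arg_cong[OF com', of "\<lambda>v. v$1"] by simp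
    show "\<beta> * q 1 $ 2 + \<beta> * q 2 $ 2 + \<alpha> * q 3 $ 2 + \<alpha> * q 4 $ 2 = 0"
      using arg_cong[OF com', of "\<lambda>v. v$2"] by simp
    show "\<beta> / dist (q 1) (q 2) ^ 3 * (q 2 $ 1 - q 1 $ 1) + \<alpha> / dist (q 1) (q 3) ^ 3 * (q 3 $ 1 - q 1 $ 1) +
    \<alpha> / dist (q 1) (q 4) ^ 3 * (q 4 $ 1 - q 1 $ 1) = lam * q 1 $ 1"
      using arg_cong[OF eq1, of "\<lambda>v. v$1"] by simp
    show "\<beta> / dist (q 1) (q 2) ^ 3 * (q 2 $ 2 - q 1 $ 2) + \<alpha> / dist (q 1) (q 3) ^ 3 * (q 3 $ 2 - q 1 $ 2) +
    \<alpha> / dist (q 1) (q 4) ^ 3 * (q 4 $ 2 - q 1 $ 2) = lam * q 1 $ 2"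
      using arg_cong[OF eq1, of "\<lambda>v. v$2"] by simp
    show "\<beta> / dist (q 1) (q 2) ^ 3 * (q 1 $ 1 - q 2 $ 1) + \<alpha> / dist (q 2) (q 3) ^ 3 * (q 3 $ 1 - q 2 $ 1) +
    \<alpha> / dist (q 2) (q 4) ^ 3 * (q 4 $ 1 - q 2 $ 1) = lam * q 2 $ 1"
      using arg_cong[OF eq2, of "\<lambda>v. v$1"] by simp
    show "\<beta> / dist (q 1) (q 2) ^ 3 * (q 1 $ 2 - q 2 $ 2) + \<alpha> / dist (q 2) (q 3) ^ 3 * (q 3 $ 2 - q 2 $ 2) +
    \<alpha> / dist (q 2) (q 4) ^ 3 * (q 4 $ 2 - q 2 $ 2) = lam * q 2 $ 2"
      using arg_cong[OF eq2, of "\<lambda>v. v$2"] by simp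
    show "\<beta> / dist (q 1) (q 3) ^ 3 * (q 1 $ 1 - q 3 $ 1) + \<beta> / dist (q 2) (q 3) ^ 3 * (q 2 $ 1 - q 3 $ 1) +
    \<alpha> / dist (q 3) (q 4) ^ 3 * (q 4 $ 1 - q 3 $ 1) = lam * q 3 $ 1"
      using arg_cong[OF eq3, of "\<lambda>v. v$1"] by simp
    show "\<beta> / dist (q 1) (q 3) ^ 3 * (q 1 $ 2 - q 3 $ 2) + \<beta> / dist (q 2) (q 3) ^ 3 * (q 2 $ 2 - q 3 $ 2) +
    \<alpha> / dist (q 3) (q 4) ^ 3 * (q 4 $ 2 - q 3 $ 2) = lam * q 3 $ 2"
      using arg_cong[OF eq3, of "\<lambda>v. v$2"] by simp
    show "dist (q 1) (q 3) = dist (q 2) (q 4)" by (rule assms(9))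
    show "((q 2$1-q 1$1)*(q 4$2-q 1$2) - (q 2$2-q 1$2)*(q 4$1-q 1$1)) * ((q 2$1-q 1$1)*(q 3$2-q 1$2) - (q 2$2-q 1$2)*(q 3$1-q 1$1)) > 0"
      using cv1 by (simp add: orient_def cross2_def)
    show "((q 2$1-q 1$1)*(q 3$2-q 1$2) - (q 2$2-q 1$2)*(q 3$1-q 1$1)) * ((q 3$1-q 2$1)*(q 4$2-q 2$2) - (q 3$2-q 2$2)*(q 4$1-q 2$1)) > 0"
    proof -
      have "orient (q 2) (q 3) (q 1) = (q 2$1-q 1$1)*(q 3$2-q 1$2) - (q 2$2-q 1$2)*(q 3$1-q 1$1)"
        by (simp add: orient_def cross2_def algebra_simps)
      moreover have "orient (q 2) (q 3) (q 4) = (q 3$1-q 2$1)*(q 4$2-q 2$2) - (q 3$2-q 2$2)*(q 4$1-q 2$1)"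
        by (simp add: orient_def cross2_def)
      ultimately show ?thesis using cv2 by simp
    qed
    show "((q 3$1-q 1$1)*(q 4$2-q 1$2) - (q 3$2-q 1$2)*(q 4$1-q 1$1)) * ((q 3$1-q 2$1)*(q 4$2-q 2$2) - (q 3$2-q 2$2)*(q 4$1-q 2$1)) > 0"
    proof -
      have "orient (q 3) (q 4) (q 1) = (q 3$1-q 1$1)*(q 4$2-q 1$2) - (q 3$2-q 1$2)*(q 4$1-q 1$1)"
        by (simp add: orient_def cross2_def algebra_simps)
      moreover have "orient (q 3) (q 4) (q 2) = (q 3$1-q 2$1)*(q 4$2-q 2$2) - (q 3$2-q 2$2)*(q 4$1-q 2$1)"
        by (simp add: orient_def cross2_def algebra_simps)
      ultimately show ?thesis using cv3 by simp
    qed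
  qed (auto)
  show ?thesis using main
    by (simp add: Delta_def abs_Delta_def tri_area_def orient_def cross2_def)
qed
end
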